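(* Let $q>0$ and let $g:\Omega\times(0,\infty)\to\mathbb R$ be a Carathéodory function, bounded below, such that $y\mapsto g(x,y)/y$ is decreasing on $(0,\infty)$ for a.e. $x\in\Omega$. Let $u,v\in L^\infty(\Omega)\cap X_0(\Omega)$ with $u,v>0$ in $\Omega$, $\int_\Omega u^{1-q}dx<\infty$, $\int_\Omega v^{1-q}dx<\infty$, and $(-\Delta)^s u\le u^{-q}+g(x,u)$ and $(-\Delta)^s v\ge v^{-q}+g(x,v)$ weakly in $(X_0(\Omega))^*$. Suppose moreover there exist $0<w\in L^\infty(\Omega)$ and constants $c_1,c_2>0$ with $c_1w\le u,v\le c_2w$ in $\Omega$ and $\int_\Omega|g(x,c_1w)|w\,dx<\infty$, $\int_\Omega|g(x,c_2w)|w\,dx<\infty$. Then $u\le v$ in $\Omega$.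
   Context: $s\in(0,1)$, $n>2s$, $\Omega\subset\mathbb R^n$ bounded domain with $C^2$ boundary. $(-\Delta)^s u(x)=2C_n^s\,\mathrm{P.V.}\int_{\mathbb R^n}\frac{u(x)-u(y)}{|x-y|^{n+2s}}dy$, $C_n^s=\pi^{-n/2}2^{2s-1}s\,\Gamma(\frac{n+2s}{2})/\Gamma(1-s)$. $Q=\mathbb R^{2n}\setminus((\mathbb R^n\setminus\Omega)^2)$; $X_0(\Omega)$ is the Hilbert space of measurable $u$ on $\mathbb R^n$ vanishing a.e. outside $\Omega$, with $u\in L^2(\Omega)$ and $\|u\|_{X_0}^2=C_n^s\int_Q\frac{|u(x)-u(y)|^2}{|x-y|^{n+2s}}dxdy<\infty$; $(X_0(\Omega))^*$ its dual. "$(-\Delta)^s u\le F$ weakly" means $C_n^s\int_Q\frac{(u(x)-u(y))(\phi(x)-\phi(y))}{|x-y|^{n+2s}}dxdy\le\int_\Omega F\phi\,dx$ for all nonnegative $\phi\in X_0(\Omega)$ (reverse inequality for $\ge$). *)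

theory Defs
  imports "HOL-Analysis.Analysis"
begin

definition frac_const :: "nat \<Rightarrow> real \<Rightarrow> real" where
  "frac_const n s = pi powr (- real n / 2) * 2 powr (2 * s - 1) * s
      * Gamma ((real n + 2 * s) / 2) / Gamma (1 - s)"

definition QQ :: "'a set \<Rightarrow> ('a \<times> 'a) set" where
  "QQ \<Omega> = UNIV - ((- \<Omega>) \<times> (- \<Omega>))"

text \<open>The space X_0(Omega) (as a set of representatives).\<close>
definition X0 :: "real \<Rightarrow> 'a::euclidean_space set \<Rightarrow> ('a \<Rightarrow> real) set" where
  "X0 s \<Omega> = {u. u \<in> borel_measurable lebesgue
      \<and> (AE x in lebesgue. x \<notin> \<Omega> \<longrightarrow> u x = 0)
      \<and> (\<integral>\<^sup>+ x. indicator \<Omega> x * ennreal ((u x)\<^sup>2) \<partial>lebesgue) < \<infinity>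
      \<and> (\<integral>\<^sup>+ z. indicator (QQ \<Omega>) z *
            ennreal (frac_const DIM('a) s * (u (fst z) - u (snd z))\<^sup>2
               / norm (fst z - snd z) powr (real DIM('a) + 2 * s))
          \<partial>(lebesgue \<Otimes>\<^sub>M lebesgue)) < \<infinity>}"

definition frac_form :: "real \<Rightarrow> 'a::euclidean_space set \<Rightarrow> ('a \<Rightarrow> real) \<Rightarrow> ('a \<Rightarrow> real) \<Rightarrow> real" where
  "frac_form s \<Omega> u \<phi> = frac_const DIM('a) s *
     (\<integral> z. indicator (QQ \<Omega>) z *
        ((u (fst z) - u (snd z)) * (\<phi> (fst z) - \<phi> (snd z))
          / norm (fst z - snd z) powr (real DIM('a) + 2 * s))
      \<partial>(lebesgue \<Otimes>\<^sub>M lebesgue))"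

definition ext_integral :: "'a measure \<Rightarrow> ('a \<Rightarrow> real) \<Rightarrow> ereal" where
  "ext_integral M f = enn2ereal (\<integral>\<^sup>+ x. ennreal (f x) \<partial>M)
                    - enn2ereal (\<integral>\<^sup>+ x. ennreal (- f x) \<partial>M)"

definition frac_sub :: "real \<Rightarrow> 'a::euclidean_space set \<Rightarrow> ('a \<Rightarrow> real) \<Rightarrow> ('a \<Rightarrow> real) \<Rightarrow> bool" where
  "frac_sub s \<Omega> u F \<longleftrightarrow> (\<forall>\<phi> \<in> X0 s \<Omega>. (AE x in lebesgue. 0 \<le> \<phi> x) \<longrightarrow>
      ereal (frac_form s \<Omega> u \<phi>) \<le> ext_integral lebesgue (\<lambda>x. indicator \<Omega> x * F x * \<phi> x))"

definition frac_super :: "real \<Rightarrow> 'a::euclidean_space set \<Rightarrow> ('a \<Rightarrow> real) \<Rightarrow> ('a \<Rightarrow> real) \<Rightarrow> bool" where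
  "frac_super s \<Omega> u F \<longleftrightarrow> (\<forall>\<phi> \<in> X0 s \<Omega>. (AE x in lebesgue. 0 \<le> \<phi> x) \<longrightarrow>
      ereal (frac_form s \<Omega> u \<phi>) \<ge> ext_integral lebesgue (\<lambda>x. indicator \<Omega> x * F x * \<phi> x))"

definition Linf :: "'a::euclidean_space set \<Rightarrow> ('a \<Rightarrow> real) set" where
  "Linf \<Omega> = {f. f \<in> borel_measurable (restrict_space lebesgue \<Omega>)
      \<and> (\<exists>C. AE x in lebesgue. x \<in> \<Omega> \<longrightarrow> \<bar>f x\<bar> \<le> C)}"

definition C2_boundary :: "'a::euclidean_space set \<Rightarrow> bool" where
  "C2_boundary \<Omega> \<longleftrightarrow> (\<forall>p \<in> frontier \<Omega>. \<exists>r>0. \<exists>(\<rho>::'a \<Rightarrow> real) \<rho>' \<rho>''.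
      (\<forall>x \<in> ball p r. (\<rho> has_derivative blinfun_apply (\<rho>' x)) (at x))
    \<and> (\<forall>x \<in> ball p r. (\<rho>' has_derivative blinfun_apply (\<rho>'' x)) (at x))
    \<and> continuous_on (ball p r) \<rho>''
    \<and> (\<forall>x \<in> ball p r. \<rho>' x \<noteq> 0)
    \<and> \<Omega> \<inter> ball p r = {x \<in> ball p r. \<rho> x < 0})"

definition caratheodory :: "'a::euclidean_space set \<Rightarrow> ('a \<Rightarrow> real \<Rightarrow> real) \<Rightarrow> bool" where
  "caratheodory \<Omega> g \<longleftrightarrow>
     (\<forall>y>0. (\<lambda>x. g x y) \<in> borel_measurable (restrict_space lebesgue \<Omega>))
   \<and> (AE x in lebesgue. x \<in> \<Omega> \<longrightarrow> continuous_on {0<..} (g x))"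

end

theory Submission
  imports Defs
begin

definition phiF :: "real \<Rightarrow> real \<Rightarrow> real" where "phiF a b = max 0 (a\<^sup>2 - b\<^sup>2) / a"
definition psiF :: "real \<Rightarrow> real \<Rightarrow> real" where "psiF a b = max 0 (a\<^sup>2 - b\<^sup>2) / b"

lemma picone_pos:
  fixes a1 a2 b1 b2 :: real
  assumes "a1 > 0" "a2 > 0" "b1 > 0" "b2 > 0"
  shows "(a1-a2)*(phiF a1 b1 - phiF a2 b2) - (b1-b2)*(psiF a1 b1 - psiF a2 b2) \<ge> 0"
proof -
  define P1 where "P1 = max 0 (a1\<^sup>2 - b1\<^sup>2)"
  define P2 where "P2 = max 0 (a2\<^sup>2 - b2\<^sup>2)"
  have E: "((a1-a2)*(phiF a1 b1 - phiF a2 b2) - (b1-b2)*(psiF a1 b1 - psiF a2 b2)) * (a1*a2*b1*b2)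
      = (a1*b2 - a2*b1) * (P1*a2*b2 - P2*a1*b1)"
    using assms unfolding phiF_def psiF_def P1_def[symmetric] P2_def[symmetric]
    by (simp add: field_simps)
  have pos: "a1*a2*b1*b2 > 0" using assms by simp
  have "(a1*b2 - a2*b1) * (P1*a2*b2 - P2*a1*b1) \<ge> 0"
  proof (cases "a1 > b1")
    case c1: True
    show ?thesis
    proof (cases "a2 > b2")
      case True
      have "b1\<^sup>2 < a1\<^sup>2" "b2\<^sup>2 < a2\<^sup>2" using c1 True assms by (auto intro!: power_strict_mono)
      then have "P1 = a1\<^sup>2 - b1\<^sup>2" "P2 = a2\<^sup>2 - b2\<^sup>2" unfolding P1_def P2_def by auto
      then have "(a1*b2 - a2*b1) * (P1*a2*b2 - P2*a1*b1) = (a1*b2 - a2*b1)\<^sup>2 * (a1*a2+b1*b2)"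
        by (simp only:) (simp add: algebra_simps power2_eq_square)
      then show ?thesis using assms by simp
    next
      case False
      have "a2\<^sup>2 \<le> b2\<^sup>2" using False assms by (auto intro!: power_mono)
      then have "P2 = 0" unfolding P2_def by auto
      moreover have "P1 \<ge> 0" unfolding P1_def by simp
      moreover have "a2*b1 \<le> b2*b1" using False assms by (simp add: mult_right_mono)
      moreover have "b2*b1 < b2*a1" using c1 assms by simp
      ultimately have "a1*b2 - a2*b1 \<ge> 0" by (simp add: algebra_simps)
      moreover have "P1*a2*b2 \<ge> 0" using \<open>P1 \<ge> 0\<close> assms by simp
      ultimately show ?thesis using \<open>P2 = 0\<close> by simp
    qed
  next
    case c1: False
    have "a1\<^sup>2 \<le> b1\<^sup>2" using c1 assms by (auto intro!: power_mono)
    then have "P1 = 0" unfolding P1_def by auto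
    moreover have "P2 \<ge> 0" unfolding P2_def by simp
    moreover have "a1*b2 \<le> b1*b2" using c1 assms by (simp add: mult_right_mono)
    have "(a1*b2 - a2*b1) \<le> 0 \<or> P2 = 0"
    proof (cases "a2 > b2")
      case True
      then have "b1*b2 < b1*a2" using assms by simp
      then show ?thesis using \<open>a1*b2 \<le> b1*b2\<close> by (simp add: algebra_simps)
    next
      case False
      have "a2\<^sup>2 \<le> b2\<^sup>2" using False assms by (auto intro!: power_mono)
      then show ?thesis unfolding P2_def by auto
    qed
    moreover have "P2*a1*b1 \<ge> 0" using \<open>P2 \<ge> 0\<close> assms by simp
    ultimately show ?thesis using \<open>P1 = 0\<close>
      by (auto simp: mult_nonpos_nonneg)
  qed
  with E pos show ?thesis by (metis zero_le_mult_iff not_le)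
qed

lemma lip_core:
  fixes a1 a2 b1 b2 R :: real
  assumes "a1 > 0" "a2 > 0" "b1 > 0" "b2 > 0" "b1 \<le> R*a1" "b2 \<le> R*a2"
  shows "\<bar>(a1 - b1\<^sup>2/a1) - (a2 - b2\<^sup>2/a2)\<bar> \<le> (1+R\<^sup>2)*\<bar>a1-a2\<bar> + 2*R*\<bar>b1-b2\<bar>"
proof -
  have R0: "R \<ge> 0" using assms by (smt (verit) mult_nonpos_nonneg)
  have r1: "0 \<le> b1/a1" "b1/a1 \<le> R" using assms by (auto simp: field_simps)
  have r2: "0 \<le> b2/a2" "b2/a2 \<le> R" using assms by (auto simp: field_simps)
  have id: "b1\<^sup>2/a1 - b2\<^sup>2/a2 = (b1-b2)*(b1/a1) + (b2/a2)*((b1/a1)*(a2-a1) + (b1-b2))"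
    using assms by (simp add: field_simps power2_eq_square)
  have "\<bar>(b1-b2)*(b1/a1)\<bar> = \<bar>b1-b2\<bar>*(b1/a1)"
    by (simp only: abs_mult abs_of_nonneg[OF r1(1)])
  also have "\<dots> \<le> \<bar>b1-b2\<bar>*R" using r1 by (intro mult_left_mono) auto
  finally have A: "\<bar>(b1-b2)*(b1/a1)\<bar> \<le> \<bar>b1-b2\<bar>*R" .
  have "\<bar>(b1/a1)*(a2-a1)\<bar> = (b1/a1)*\<bar>a1-a2\<bar>"
    by (simp only: abs_mult abs_of_nonneg[OF r1(1)] abs_minus_commute)
  also have "\<dots> \<le> R*\<bar>a1-a2\<bar>" using r1 by (intro mult_right_mono) auto
  finally have "\<bar>(b1/a1)*(a2-a1)\<bar> \<le> R*\<bar>a1-a2\<bar>" .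
  then have B0: "\<bar>(b1/a1)*(a2-a1) + (b1-b2)\<bar> \<le> R*\<bar>a1-a2\<bar> + \<bar>b1-b2\<bar>" by linarith
  have "\<bar>(b2/a2)*((b1/a1)*(a2-a1) + (b1-b2))\<bar> = (b2/a2)*\<bar>(b1/a1)*(a2-a1) + (b1-b2)\<bar>"
    by (simp only: abs_mult abs_of_nonneg[OF r2(1)])
  also have "\<dots> \<le> R*(R*\<bar>a1-a2\<bar> + \<bar>b1-b2\<bar>)" using r2 B0 by (intro mult_mono) auto
  finally have B: "\<bar>(b2/a2)*((b1/a1)*(a2-a1) + (b1-b2))\<bar> \<le> R*(R*\<bar>a1-a2\<bar> + \<bar>b1-b2\<bar>)" .
  have "\<bar>b1\<^sup>2/a1 - b2\<^sup>2/a2\<bar> \<le> \<bar>b1-b2\<bar>*R + R*(R*\<bar>a1-a2\<bar> + \<bar>b1-b2\<bar>)"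
    unfolding id using A B by linarith
  then show ?thesis by (simp add: algebra_simps power2_eq_square)
qed

lemma max0_lip: "\<bar>max 0 (x::real) - max 0 y\<bar> \<le> \<bar>x - y\<bar>" by linarith

lemma sq_bound: "\<bar>z::real\<bar> \<le> A*\<bar>x\<bar> + B*\<bar>y\<bar> \<Longrightarrow> A \<ge> 0 \<Longrightarrow> B \<ge> 0 \<Longrightarrow> z\<^sup>2 \<le> (2*A\<^sup>2)*x\<^sup>2 + (2*B\<^sup>2)*y\<^sup>2"
proof -
  assume h: "\<bar>z\<bar> \<le> A*\<bar>x\<bar> + B*\<bar>y\<bar>" "A \<ge> 0" "B \<ge> 0"
  have "z\<^sup>2 = \<bar>z\<bar>\<^sup>2" by simp
  also have "\<dots> \<le> (A*\<bar>x\<bar> + B*\<bar>y\<bar>)\<^sup>2" using h by (intro power_mono) auto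
  also have "\<dots> \<le> (2*A\<^sup>2)*x\<^sup>2 + (2*B\<^sup>2)*y\<^sup>2"
    using sum_squares_ge_zero[of "A*\<bar>x\<bar> - B*\<bar>y\<bar>" 0] 
    by (simp add: power2_eq_square algebra_simps)
  finally show ?thesis .
qed

definition phiT :: "real \<Rightarrow> real \<Rightarrow> real" where "phiT a b = (if 0 < a \<and> 0 < b then phiF a b else 0)"
definition psiT :: "real \<Rightarrow> real \<Rightarrow> real" where "psiT a b = (if 0 < a \<and> 0 < b then psiF a b else 0)"
definition good :: "real \<Rightarrow> real \<Rightarrow> real \<Rightarrow> bool" where
  "good R a b \<longleftrightarrow> (0 < a \<and> 0 < b \<and> b \<le> R*a \<and> a \<le> R*b) \<or> (a = 0 \<and> b = 0)"
definition LL :: "real \<Rightarrow> real" where "LL R = 2*(1+R\<^sup>2)\<^sup>2 + 8*R\<^sup>2"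

lemma phiF_eq: "a > 0 \<Longrightarrow> phiF a b = max 0 (a - b\<^sup>2/a)"
  unfolding phiF_def by (simp add: max_def field_simps power2_eq_square)

lemma psiF_eq: "b > 0 \<Longrightarrow> psiF a b = max 0 (- (b - a\<^sup>2/b))"
  unfolding psiF_def by (simp add: max_def field_simps power2_eq_square)

lemma phiT_nonneg: "phiT a b \<ge> 0"
  unfolding phiT_def phiF_def by auto
lemma psiT_nonneg: "psiT a b \<ge> 0"
  unfolding psiT_def psiF_def by auto

lemma phiT_le: "a \<ge> 0 \<Longrightarrow> phiT a b \<le> a"
  unfolding phiT_def by (auto simp: phiF_eq)

lemma psiT_le: assumes "good R a b" shows "psiT a b \<le> R*a"
proof (cases "0 < a \<and> 0 < b")
  case True
  then have "a \<le> R*b" "b \<le> R*a" using assms unfolding good_def by auto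
  have "psiF a b = max 0 (a\<^sup>2 - b\<^sup>2)/b" by (simp add: psiF_def)
  also have "\<dots> \<le> a\<^sup>2/b" using True by (intro divide_right_mono) auto
  also have "\<dots> = a*(a/b)" by (simp add: power2_eq_square)
  also have "\<dots> \<le> a*R" using True \<open>a \<le> R*b\<close> by (intro mult_left_mono) (auto simp: field_simps)
  finally show ?thesis using True by (simp add: psiT_def mult.commute)
next
  case False
  then have "a = 0" "b = 0" using assms unfolding good_def by auto
  then show ?thesis by (simp add: psiT_def)
qed

lemma LL_ge: "R \<ge> 1 \<Longrightarrow> LL R \<ge> 1 \<and> LL R \<ge> R\<^sup>2 \<and> LL R \<ge> 2*(1+R\<^sup>2)\<^sup>2 \<and> LL R \<ge> 8*R\<^sup>2"
proof -
  assume "R \<ge> 1"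
  then have r: "R\<^sup>2 \<ge> 1" by (simp add: one_le_power)
  have "(1+R\<^sup>2)\<^sup>2 \<ge> 0" by simp
  then show ?thesis unfolding LL_def using r by linarith
qed

lemma picone_T:
  assumes "good R a1 b1" "good R a2 b2"
  shows "(a1-a2)*(phiT a1 b1 - phiT a2 b2) - (b1-b2)*(psiT a1 b1 - psiT a2 b2) \<ge> 0"
proof -
  have z: "a*(phiF a b) - b*(psiF a b) = 0" if "a > 0" "b > 0" for a b
    using that by (simp add: phiF_def psiF_def)
  consider "0 < a1 \<and> 0 < b1" "0 < a2 \<and> 0 < b2" | "0 < a1 \<and> 0 < b1" "a2 = 0 \<and> b2 = 0"
    | "a1 = 0 \<and> b1 = 0" "0 < a2 \<and> 0 < b2" | "a1 = 0 \<and> b1 = 0" "a2 = 0 \<and> b2 = 0"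
    using assms unfolding good_def by blast
  then show ?thesis
  proof cases
    case 1 then show ?thesis using picone_pos[of a1 a2 b1 b2] unfolding phiT_def psiT_def by simp
  next
    case 2 then show ?thesis using z[of a1 b1] unfolding phiT_def psiT_def by simp
  next
    case 3 then show ?thesis using z[of a2 b2] unfolding phiT_def psiT_def by simp
  next
    case 4 then show ?thesis unfolding phiT_def psiT_def by simp
  qed
qed

lemma lip_T:
  assumes "good R a1 b1" "good R a2 b2" "R \<ge> 1"
  shows "(phiT a1 b1 - phiT a2 b2)\<^sup>2 \<le> LL R * ((a1-a2)\<^sup>2 + (b1-b2)\<^sup>2)"
    and "(psiT a1 b1 - psiT a2 b2)\<^sup>2 \<le> LL R * ((a1-a2)\<^sup>2 + (b1-b2)\<^sup>2)"
proof -
  have L: "LL R \<ge> 1" "LL R \<ge> R\<^sup>2" "LL R \<ge> 2*(1+R\<^sup>2)\<^sup>2" "LL R \<ge> 8*R\<^sup>2" using LL_ge[OF assms(3)] by auto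
  have gen: "x\<^sup>2 \<le> LL R * (p + q)" if "x\<^sup>2 \<le> A*p + B*q" "A \<le> LL R" "B \<le> LL R" "p \<ge> 0" "q \<ge> 0" for x A B p q
  proof -
    have "A*p \<le> LL R * p" "B*q \<le> LL R * q" using that by (auto intro: mult_right_mono)
    then show ?thesis using that by (simp add: algebra_simps)
  qed
  have one: "(phiT a1 b1 - phiT a2 b2)\<^sup>2 \<le> LL R * ((a1-a2)\<^sup>2 + (b1-b2)\<^sup>2)
     \<and> (psiT a1 b1 - psiT a2 b2)\<^sup>2 \<le> LL R * ((a1-a2)\<^sup>2 + (b1-b2)\<^sup>2)"
    if g1: "good R a1 b1" and g2: "good R a2 b2" and pos: "0 < a1" "0 < b1" for a1 b1 a2 b2
  proof (cases "0 < a2 \<and> 0 < b2")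
    case True
    have c: "b1 \<le> R*a1" "a1 \<le> R*b1" "b2 \<le> R*a2" "a2 \<le> R*b2" using g1 g2 pos True unfolding good_def by auto
    have R0: "R \<ge> 0" using assms by simp
    have "\<bar>phiF a1 b1 - phiF a2 b2\<bar> \<le> (1+R\<^sup>2)*\<bar>a1-a2\<bar> + 2*R*\<bar>b1-b2\<bar>"
      using order.trans[OF max0_lip lip_core[of a1 a2 b1 b2 R]] pos True c by (simp add: phiF_eq)
    from sq_bound[OF this] R0
    have p: "(phiF a1 b1 - phiF a2 b2)\<^sup>2 \<le> 2*(1+R\<^sup>2)\<^sup>2*(a1-a2)\<^sup>2 + 8*R\<^sup>2*(b1-b2)\<^sup>2"
      by (simp add: power_mult_distrib)
    have "\<bar>psiF a1 b1 - psiF a2 b2\<bar> \<le> (1+R\<^sup>2)*\<bar>b1-b2\<bar> + 2*R*\<bar>a1-a2\<bar>"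
      using order.trans[OF max0_lip, of "- (b1 - a1\<^sup>2/b1)" "- (b2 - a2\<^sup>2/b2)"]
        lip_core[of b1 b2 a1 a2 R] pos True c by (simp add: psiF_eq abs_minus_commute)
    from sq_bound[OF this] R0
    have q: "(psiF a1 b1 - psiF a2 b2)\<^sup>2 \<le> 2*(1+R\<^sup>2)\<^sup>2*(b1-b2)\<^sup>2 + 8*R\<^sup>2*(a1-a2)\<^sup>2"
      by (simp add: power_mult_distrib)
    have e: "phiT a1 b1 = phiF a1 b1" "phiT a2 b2 = phiF a2 b2" "psiT a1 b1 = psiF a1 b1" "psiT a2 b2 = psiF a2 b2"
      using pos True unfolding phiT_def psiT_def by auto
    have "(phiF a1 b1 - phiF a2 b2)\<^sup>2 \<le> LL R * ((a1-a2)\<^sup>2 + (b1-b2)\<^sup>2)"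
      by (rule gen[OF p]) (use L in auto)
    moreover have "(psiF a1 b1 - psiF a2 b2)\<^sup>2 \<le> LL R * ((b1-b2)\<^sup>2 + (a1-a2)\<^sup>2)"
      by (rule gen[OF q]) (use L in auto)
    ultimately show ?thesis unfolding e by (simp add: add.commute)
  next
    case False
    then have z: "a2 = 0" "b2 = 0" using g2 unfolding good_def by auto
    have "phiT a1 b1 \<le> a1" using phiT_le pos by auto
    then have "(phiT a1 b1)\<^sup>2 \<le> a1\<^sup>2" using phiT_nonneg by (intro power_mono) auto
    then have p: "(phiT a1 b1 - phiT a2 b2)\<^sup>2 \<le> 1*(a1-a2)\<^sup>2 + 0*(b1-b2)\<^sup>2" using z by (simp add: phiT_def)
    have "psiT a1 b1 \<le> R*a1" using psiT_le g1 by auto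
    then have "(psiT a1 b1)\<^sup>2 \<le> (R*a1)\<^sup>2" using psiT_nonneg by (intro power_mono) auto
    then have q: "(psiT a1 b1 - psiT a2 b2)\<^sup>2 \<le> R\<^sup>2*(a1-a2)\<^sup>2 + 0*(b1-b2)\<^sup>2" using z
      by (simp add: psiT_def power_mult_distrib)
    have "(phiT a1 b1 - phiT a2 b2)\<^sup>2 \<le> LL R * ((a1-a2)\<^sup>2 + (b1-b2)\<^sup>2)"
      by (rule gen[OF p]) (use L in auto)
    moreover have "(psiT a1 b1 - psiT a2 b2)\<^sup>2 \<le> LL R * ((a1-a2)\<^sup>2 + (b1-b2)\<^sup>2)"
      by (rule gen[OF q]) (use L in auto)
    ultimately show ?thesis by simp
  qed
  have both: "(phiT a1 b1 - phiT a2 b2)\<^sup>2 \<le> LL R * ((a1-a2)\<^sup>2 + (b1-b2)\<^sup>2)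
     \<and> (psiT a1 b1 - psiT a2 b2)\<^sup>2 \<le> LL R * ((a1-a2)\<^sup>2 + (b1-b2)\<^sup>2)"
  proof (cases "0 < a1 \<and> 0 < b1")
    case True then show ?thesis using one[OF assms(1,2)] by auto
  next
    case False
    then have z: "a1 = 0" "b1 = 0" using assms(1) unfolding good_def by auto
    show ?thesis
    proof (cases "0 < a2 \<and> 0 < b2")
      case True
      then show ?thesis using one[OF assms(2,1)] by (simp add: power2_commute)
    next
      case False
      then have "a2 = 0" "b2 = 0" using assms(2) unfolding good_def by auto
      then show ?thesis using z by (simp add: phiT_def psiT_def)
    qed
  qed
  then show "(phiT a1 b1 - phiT a2 b2)\<^sup>2 \<le> LL R * ((a1-a2)\<^sup>2 + (b1-b2)\<^sup>2)"
    and "(psiT a1 b1 - psiT a2 b2)\<^sup>2 \<le> LL R * ((a1-a2)\<^sup>2 + (b1-b2)\<^sup>2)" by auto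
qed

lemma sigma_finite_lebesgue: "sigma_finite_measure (lebesgue :: 'a::euclidean_space measure)"
proof -
  obtain A :: "'a set set" where A: "countable A" "A \<subseteq> sets lborel" "\<Union>A = space lborel" "\<forall>a\<in>A. emeasure lborel a \<noteq> \<infinity>"
    using sigma_finite_measure.sigma_finite_countable[OF sigma_finite_lborel] by blast
  show ?thesis
  proof
    show "\<exists>A. countable A \<and> A \<subseteq> sets lebesgue \<and> \<Union> A = space (lebesgue :: 'a measure) \<and> (\<forall>a\<in>A. emeasure lebesgue a \<noteq> \<infinity>)"
      using A by (intro exI[of _ A]) (auto simp: emeasure_completion)
  qed
qed

interpretation leb: sigma_finite_measure "lebesgue :: 'a::euclidean_space measure"
  by (rule sigma_finite_lebesgue)

interpretation leb_pair: pair_sigma_finite "lebesgue :: 'a::euclidean_space measure" "lebesgue :: 'a measure"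
  by (intro pair_sigma_finite.intro sigma_finite_lebesgue)

lemma open_sets_lebesgue: "open (S :: 'a::euclidean_space set) \<Longrightarrow> S \<in> sets lebesgue"
  by (simp add: borel_open)

lemma ident_meas: "(\<lambda>x::'a::euclidean_space. x) \<in> borel_measurable lebesgue"
  by (rule measurable_completion) simp

lemma fst_meas: "(\<lambda>z. fst z :: 'a::euclidean_space) \<in> borel_measurable (lebesgue \<Otimes>\<^sub>M (lebesgue :: 'a measure))"
  by (rule measurable_compose[OF measurable_fst ident_meas])
lemma snd_meas: "(\<lambda>z. snd z :: 'a::euclidean_space) \<in> borel_measurable (lebesgue \<Otimes>\<^sub>M (lebesgue :: 'a measure))"
  by (rule measurable_compose[OF measurable_snd ident_meas])

lemma Kd_meas: "(\<lambda>z. norm (fst z - snd z :: 'a::euclidean_space) powr r) \<in> borel_measurable (lebesgue \<Otimes>\<^sub>M (lebesgue :: 'a measure))"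
  using fst_meas snd_meas by measurable

lemma fun_fst_meas: "f \<in> borel_measurable lebesgue \<Longrightarrow> (\<lambda>z. f (fst z) :: real) \<in> borel_measurable (lebesgue \<Otimes>\<^sub>M (lebesgue :: 'a::euclidean_space measure))"
  by (rule measurable_compose[OF measurable_fst])
lemma fun_snd_meas: "f \<in> borel_measurable lebesgue \<Longrightarrow> (\<lambda>z. f (snd z) :: real) \<in> borel_measurable (lebesgue \<Otimes>\<^sub>M (lebesgue :: 'a::euclidean_space measure))"
  by (rule measurable_compose[OF measurable_snd])

lemma QQ_sets: "open (\<Omega>::'a::euclidean_space set) \<Longrightarrow> QQ \<Omega> \<in> sets (lebesgue \<Otimes>\<^sub>M (lebesgue :: 'a measure))"
proof -
  assume "open \<Omega>"
  then have "- \<Omega> \<in> sets lebesgue" using borel_closed[OF closed_Compl[OF \<open>open \<Omega>\<close>]] by (metis sets_completionI_sets sets_lborel)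
  then have "(- \<Omega>) \<times> (- \<Omega>) \<in> sets (lebesgue \<Otimes>\<^sub>M (lebesgue :: 'a measure))" by (intro pair_measureI)
  then show ?thesis unfolding QQ_def
    by (metis sets.compl_sets space_pair_measure space_completion space_lborel space_borel UNIV_Times_UNIV Compl_eq_Diff_UNIV)
qed

lemma frac_const_pos: "0 < s \<Longrightarrow> s < 1 \<Longrightarrow> frac_const n s > 0"
  unfolding frac_const_def
  by (intro divide_pos_pos mult_pos_pos) (auto simp: Gamma_real_pos_exp)

lemma AE_pair_both:
  assumes "AE x in (lebesgue :: 'a::euclidean_space measure). P x"
  shows "AE z in (lebesgue \<Otimes>\<^sub>M (lebesgue :: 'a measure)). P (fst z) \<and> P (snd z)"
proof -
  from assms obtain N where N: "{x \<in> space lebesgue. \<not> P x} \<subseteq> N" "emeasure lebesgue N = 0" "N \<in> sets lebesgue"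
    by (auto elim!: AE_E)
  have Nn: "N \<in> null_sets lebesgue" using N by (simp add: null_sets_def)
  have U: "UNIV \<in> sets (lebesgue :: 'a measure)" by (metis sets.top space_completion space_lborel space_borel)
  have "N \<times> UNIV \<in> null_sets (lebesgue \<Otimes>\<^sub>M (lebesgue :: 'a measure))"
    using Nn U by (rule leb.times_in_null_sets1)
  moreover have "UNIV \<times> N \<in> null_sets (lebesgue \<Otimes>\<^sub>M (lebesgue :: 'a measure))"
    using U Nn by (simp add: null_sets_def leb.emeasure_pair_measure_Times)
  ultimately have "N \<times> UNIV \<union> UNIV \<times> N \<in> null_sets (lebesgue \<Otimes>\<^sub>M (lebesgue :: 'a measure))" by auto
  then show ?thesis
    by (rule AE_I') (use N in \<open>auto simp: space_pair_measure\<close>)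
qed

definition Kd :: "real \<Rightarrow> ('a::euclidean_space \<times> 'a) \<Rightarrow> real" where
  "Kd s z = norm (fst z - snd z) powr (real DIM('a) + 2 * s)"

definition Gf :: "real \<Rightarrow> 'a::euclidean_space set \<Rightarrow> ('a \<Rightarrow> real) \<Rightarrow> ('a \<times> 'a) \<Rightarrow> real" where
  "Gf s \<Omega> f z = indicator (QQ \<Omega>) z * (frac_const DIM('a) s * (f (fst z) - f (snd z))\<^sup>2 / Kd s z)"

definition Bf :: "real \<Rightarrow> 'a::euclidean_space set \<Rightarrow> ('a \<Rightarrow> real) \<Rightarrow> ('a \<Rightarrow> real) \<Rightarrow> ('a \<times> 'a) \<Rightarrow> real" where
  "Bf s \<Omega> f g z = frac_const DIM('a) s * (indicator (QQ \<Omega>) z *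
      ((f (fst z) - f (snd z)) * (g (fst z) - g (snd z)) / Kd s z))"

lemma ind_ennreal: "indicator A z * ennreal y = ennreal (indicator A z * y)"
  by (cases "z \<in> A") auto

lemma Kd_nonneg: "Kd s z \<ge> 0" unfolding Kd_def by simp

lemma Gf_nonneg: "0 < s \<Longrightarrow> s < 1 \<Longrightarrow> Gf s \<Omega> f z \<ge> 0"
  unfolding Gf_def using frac_const_pos[of s "DIM('a)"] Kd_nonneg[of s z]
  by (auto intro!: mult_nonneg_nonneg divide_nonneg_nonneg simp: indicator_def)

lemma Kd_meas': "Kd s \<in> borel_measurable (lebesgue \<Otimes>\<^sub>M (lebesgue :: 'a::euclidean_space measure))"
  unfolding Kd_def[abs_def] by (rule Kd_meas)

lemma Gf_meas:
  assumes "open \<Omega>" "f \<in> borel_measurable lebesgue"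
  shows "Gf s \<Omega> f \<in> borel_measurable (lebesgue \<Otimes>\<^sub>M (lebesgue :: 'a::euclidean_space measure))"
proof -
  have [measurable]: "QQ \<Omega> \<in> sets (lebesgue \<Otimes>\<^sub>M (lebesgue :: 'a measure))" using QQ_sets assms by auto
  have [measurable]: "Kd s \<in> borel_measurable (lebesgue \<Otimes>\<^sub>M (lebesgue :: 'a measure))" by (rule Kd_meas')
  have [measurable]: "(\<lambda>z. f (fst z)) \<in> borel_measurable (lebesgue \<Otimes>\<^sub>M (lebesgue :: 'a measure))"
    "(\<lambda>z. f (snd z)) \<in> borel_measurable (lebesgue \<Otimes>\<^sub>M (lebesgue :: 'a measure))"
    using assms fun_fst_meas fun_snd_meas by auto
  show ?thesis unfolding Gf_def[abs_def] by measurable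
qed

lemma Bf_meas:
  assumes "open \<Omega>" "f \<in> borel_measurable lebesgue" "g \<in> borel_measurable lebesgue"
  shows "Bf s \<Omega> f g \<in> borel_measurable (lebesgue \<Otimes>\<^sub>M (lebesgue :: 'a::euclidean_space measure))"
proof -
  have [measurable]: "QQ \<Omega> \<in> sets (lebesgue \<Otimes>\<^sub>M (lebesgue :: 'a measure))" using QQ_sets assms by auto
  have [measurable]: "Kd s \<in> borel_measurable (lebesgue \<Otimes>\<^sub>M (lebesgue :: 'a measure))" by (rule Kd_meas')
  have [measurable]: "(\<lambda>z. f (fst z)) \<in> borel_measurable (lebesgue \<Otimes>\<^sub>M (lebesgue :: 'a measure))"
    "(\<lambda>z. f (snd z)) \<in> borel_measurable (lebesgue \<Otimes>\<^sub>M (lebesgue :: 'a measure))"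
    "(\<lambda>z. g (fst z)) \<in> borel_measurable (lebesgue \<Otimes>\<^sub>M (lebesgue :: 'a measure))"
    "(\<lambda>z. g (snd z)) \<in> borel_measurable (lebesgue \<Otimes>\<^sub>M (lebesgue :: 'a measure))"
    using assms fun_fst_meas fun_snd_meas by auto
  show ?thesis unfolding Bf_def[abs_def] by measurable
qed

lemma X0_parts:
  assumes "f \<in> X0 s \<Omega>"
  shows "f \<in> borel_measurable lebesgue" "AE x in lebesgue. x \<notin> \<Omega> \<longrightarrow> f x = 0"
    "(\<integral>\<^sup>+ x. ennreal (indicator \<Omega> x * (f x)\<^sup>2) \<partial>lebesgue) < \<infinity>"
    "(\<integral>\<^sup>+ z. ennreal (Gf s \<Omega> f z) \<partial>(lebesgue \<Otimes>\<^sub>M lebesgue)) < \<infinity>"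
  using assms unfolding X0_def Gf_def Kd_def by (auto simp: ind_ennreal)

lemma nn_bound:
  fixes h f1 f2 :: "'b \<Rightarrow> real"
  assumes "f1 \<in> borel_measurable M" "f2 \<in> borel_measurable M" "\<And>x. f1 x \<ge> 0" "\<And>x. f2 x \<ge> 0"
    "(\<integral>\<^sup>+ x. ennreal (f1 x) \<partial>M) < \<infinity>" "(\<integral>\<^sup>+ x. ennreal (f2 x) \<partial>M) < \<infinity>"
    "AE x in M. h x \<le> L * (f1 x + f2 x)" "L \<ge> 0"
  shows "(\<integral>\<^sup>+ x. ennreal (h x) \<partial>M) < \<infinity>"
proof -
  have "AE x in M. ennreal (h x) \<le> ennreal L * (ennreal (f1 x) + ennreal (f2 x))"
    using assms(7)
  proof eventually_elim
    case (elim x)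
    have "ennreal (h x) \<le> ennreal (L * (f1 x + f2 x))" using elim by (rule ennreal_leI)
    also have "\<dots> = ennreal L * ennreal (f1 x + f2 x)"
      using assms(3)[of x] assms(4)[of x] assms(8) by (intro ennreal_mult) auto
    also have "ennreal (f1 x + f2 x) = ennreal (f1 x) + ennreal (f2 x)"
      using assms(3,4)[of x] by (intro ennreal_plus) auto
    finally show ?case .
  qed
  then have "(\<integral>\<^sup>+ x. ennreal (h x) \<partial>M) \<le> (\<integral>\<^sup>+ x. ennreal L * (ennreal (f1 x) + ennreal (f2 x)) \<partial>M)"
    by (rule nn_integral_mono_AE)
  also have "\<dots> = ennreal L * ((\<integral>\<^sup>+ x. ennreal (f1 x) \<partial>M) + (\<integral>\<^sup>+ x. ennreal (f2 x) \<partial>M))"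
    using assms(1,2) by (simp add: nn_integral_cmult nn_integral_add)
  also have "\<dots> < \<infinity>" using assms(5,6) by (simp add: ennreal_mult_less_top)
  finally show ?thesis .
qed

lemma X0_intro:
  fixes \<Omega> :: "'a::euclidean_space set"
  assumes "open \<Omega>" "0 < s" "s < 1" "f \<in> X0 s \<Omega>" "h \<in> X0 s \<Omega>" "\<phi> \<in> borel_measurable lebesgue"
    "AE x in lebesgue. x \<notin> \<Omega> \<longrightarrow> \<phi> x = 0" "L \<ge> 0"
    "AE x in lebesgue. (\<phi> x)\<^sup>2 \<le> L * ((f x)\<^sup>2 + (h x)\<^sup>2)"
    "AE z in lebesgue \<Otimes>\<^sub>M lebesgue. (\<phi> (fst z) - \<phi> (snd z))\<^sup>2 \<le> L * ((f (fst z) - f (snd z))\<^sup>2 + (h (fst z) - h (snd z))\<^sup>2)"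
  shows "\<phi> \<in> X0 s \<Omega>"
proof -
  note f = X0_parts[OF assms(4)] and h = X0_parts[OF assms(5)]
  have Om[measurable]: "\<Omega> \<in> sets lebesgue" using assms(1) by (rule open_sets_lebesgue)
  have [measurable]: "f \<in> borel_measurable lebesgue" "h \<in> borel_measurable lebesgue" "\<phi> \<in> borel_measurable lebesgue"
    using f h assms(6) by auto
  have "(\<integral>\<^sup>+ x. ennreal (indicator \<Omega> x * (\<phi> x)\<^sup>2) \<partial>lebesgue) < \<infinity>"
  proof (rule nn_bound[where L=L])
    show "AE x in lebesgue. indicator \<Omega> x * (\<phi> x)\<^sup>2 \<le> L * (indicator \<Omega> x * (f x)\<^sup>2 + indicator \<Omega> x * (h x)\<^sup>2)"
      using assms(9) by eventually_elim (auto simp: indicator_def)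
    show "(\<lambda>x. indicator \<Omega> x * (f x)\<^sup>2) \<in> borel_measurable lebesgue" by measurable
    show "(\<lambda>x. indicator \<Omega> x * (h x)\<^sup>2) \<in> borel_measurable lebesgue" by measurable
    show "\<And>x. 0 \<le> indicator \<Omega> x * (f x)\<^sup>2" "\<And>x. 0 \<le> indicator \<Omega> x * (h x)\<^sup>2" by auto
  qed (fact f(3) h(3) assms(8))+
  moreover have "(\<integral>\<^sup>+ z. ennreal (Gf s \<Omega> \<phi> z) \<partial>(lebesgue \<Otimes>\<^sub>M lebesgue)) < \<infinity>"
  proof (rule nn_bound[where L=L])
    show "AE z in lebesgue \<Otimes>\<^sub>M lebesgue. Gf s \<Omega> \<phi> z \<le> L * (Gf s \<Omega> f z + Gf s \<Omega> h z)"
      using assms(10)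
    proof eventually_elim
      case (elim z)
      have C: "frac_const DIM('a) s > 0" using frac_const_pos assms by auto
      have "frac_const DIM('a) s * (\<phi> (fst z) - \<phi> (snd z))\<^sup>2 / Kd s z \<le>
         frac_const DIM('a) s * (L * ((f (fst z) - f (snd z))\<^sup>2 + (h (fst z) - h (snd z))\<^sup>2)) / Kd s z"
        using elim C Kd_nonneg[of s z] by (intro divide_right_mono mult_left_mono) auto
      moreover have "frac_const DIM('a) s * (L * ((f (fst z) - f (snd z))\<^sup>2 + (h (fst z) - h (snd z))\<^sup>2)) / Kd s z
         = L * (frac_const DIM('a) s * (f (fst z) - f (snd z))\<^sup>2 / Kd s z + frac_const DIM('a) s * (h (fst z) - h (snd z))\<^sup>2 / Kd s z)"
        by (simp add: distrib_left add_divide_distrib mult.left_commute)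
      ultimately show ?case unfolding Gf_def by (cases "z \<in> QQ \<Omega>") (simp_all add: assms(8))
    qed
    show "\<And>x. 0 \<le> Gf s \<Omega> f x" "\<And>x. 0 \<le> Gf s \<Omega> h x" using Gf_nonneg assms(2,3) by auto
  qed (fact Gf_meas[OF assms(1) f(1)] Gf_meas[OF assms(1) h(1)] f(4) h(4) assms(8))+
  ultimately show ?thesis
    using assms(6,7) unfolding X0_def Gf_def Kd_def by (auto simp: ind_ennreal)
qed

lemma Gf_int:
  assumes "open \<Omega>" "0 < s" "s < 1" "f \<in> X0 s \<Omega>"
  shows "integrable (lebesgue \<Otimes>\<^sub>M lebesgue) (Gf s \<Omega> f :: 'a::euclidean_space \<times> 'a \<Rightarrow> real)"
  using X0_parts[OF assms(4)] Gf_meas[OF assms(1)] Gf_nonneg[OF assms(2,3)]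
  by (intro integrableI_nonneg AE_I2) auto

lemma Bf_int:
  assumes "open \<Omega>" "0 < s" "s < 1" "f \<in> X0 s \<Omega>" "g \<in> X0 s \<Omega>"
  shows "integrable (lebesgue \<Otimes>\<^sub>M lebesgue) (Bf s \<Omega> f g :: 'a::euclidean_space \<times> 'a \<Rightarrow> real)"
proof (rule Bochner_Integration.integrable_bound)
  show "integrable (lebesgue \<Otimes>\<^sub>M lebesgue) (\<lambda>z. Gf s \<Omega> f z + Gf s \<Omega> g z :: real)"
    using Gf_int[OF assms(1-4)] Gf_int[OF assms(1-3,5)] by auto
  show "Bf s \<Omega> f g \<in> borel_measurable (lebesgue \<Otimes>\<^sub>M lebesgue)"
    using Bf_meas assms X0_parts by blast
  show "AE z in lebesgue \<Otimes>\<^sub>M lebesgue. norm (Bf s \<Omega> f g z) \<le> norm (Gf s \<Omega> f z + Gf s \<Omega> g z)"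
  proof (rule AE_I2)
    fix z :: "'a \<times> 'a"
    define a where "a = f (fst z) - f (snd z)"
    define b where "b = g (fst z) - g (snd z)"
    define C where "C = frac_const DIM('a) s"
    define K where "K = Kd s z"
    have C: "C > 0" using frac_const_pos assms unfolding C_def by auto
    have K: "K \<ge> 0" unfolding K_def by (rule Kd_nonneg)
    have ab: "\<bar>a*b\<bar> \<le> a\<^sup>2 + b\<^sup>2"
    proof -
      have "0 \<le> (\<bar>a\<bar> - \<bar>b\<bar>)\<^sup>2" by simp
      also have "\<dots> = a\<^sup>2 - 2*(\<bar>a\<bar>*\<bar>b\<bar>) + b\<^sup>2" by (simp add: power2_diff)
      finally have "2*(\<bar>a\<bar>*\<bar>b\<bar>) \<le> a\<^sup>2 + b\<^sup>2" by linarith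
      moreover have "\<bar>a\<bar>*\<bar>b\<bar> \<ge> 0" by simp
      ultimately have "\<bar>a\<bar>*\<bar>b\<bar> \<le> a\<^sup>2 + b\<^sup>2" by linarith
      then show ?thesis by (simp add: abs_mult)
    qed
    have bd: "\<bar>C * (a*b/K)\<bar> \<le> C*(a\<^sup>2/K) + C*(b\<^sup>2/K)"
    proof -
      have "\<bar>C * (a*b/K)\<bar> = C * (\<bar>a*b\<bar>/K)" using C K by (simp add: abs_mult)
      also have "\<dots> \<le> C * ((a\<^sup>2 + b\<^sup>2)/K)" using C K ab by (intro mult_left_mono divide_right_mono) auto
      finally show ?thesis by (simp add: add_divide_distrib distrib_left)
    qed
    have nn: "Gf s \<Omega> f z \<ge> 0" "Gf s \<Omega> g z \<ge> 0"
      using Gf_nonneg[OF assms(2,3), of \<Omega> f z] Gf_nonneg[OF assms(2,3), of \<Omega> g z] by auto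
    show "norm (Bf s \<Omega> f g z) \<le> norm (Gf s \<Omega> f z + Gf s \<Omega> g z)"
    proof (cases "z \<in> QQ \<Omega>")
      case True
      have e: "Bf s \<Omega> f g z = C * (a*b/K)" "Gf s \<Omega> f z = C*(a\<^sup>2/K)" "Gf s \<Omega> g z = C*(b\<^sup>2/K)"
        unfolding Bf_def Gf_def a_def[symmetric] b_def[symmetric] C_def[symmetric] K_def[symmetric]
        using True by simp_all
      show ?thesis using bd nn unfolding e by simp
    next
      case False
      then show ?thesis unfolding Bf_def by simp
    qed
  qed
qed

lemma frac_form_Bf: "frac_form s \<Omega> f g = (\<integral> z. Bf s \<Omega> f g z \<partial>(lebesgue \<Otimes>\<^sub>M lebesgue))"
proof -
  have "frac_const DIM('a) s * (\<integral> z. indicator (QQ \<Omega>) z *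
        ((f (fst z) - f (snd z)) * (g (fst z) - g (snd z)) / Kd s z) \<partial>(lebesgue \<Otimes>\<^sub>M lebesgue))
     = (\<integral> z. frac_const DIM('a) s * (indicator (QQ \<Omega>) z *
        ((f (fst z) - f (snd z)) * (g (fst z) - g (snd z)) / Kd s z)) \<partial>(lebesgue \<Otimes>\<^sub>M lebesgue))"
    by (rule integral_mult_right_zero[symmetric])
  then show ?thesis unfolding frac_form_def Bf_def Kd_def by simp
qed

lemma ceil_approx:
  fixes y :: real assumes "y > 0"
  shows "(\<lambda>n. real_of_int \<lceil>y * 2^n\<rceil> / 2^n) \<longlonglongrightarrow> y"
    and "\<And>n. 0 < \<lceil>y * 2^n\<rceil>"
proof -
  have lo: "y \<le> real_of_int \<lceil>y * 2^n\<rceil> / 2^n" for n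
  proof -
    have "y * 2^n \<le> real_of_int \<lceil>y * 2^n\<rceil>" by (rule le_of_int_ceiling)
    then show ?thesis by (simp add: pos_le_divide_eq)
  qed
  have hi: "real_of_int \<lceil>y * 2^n\<rceil> / 2^n \<le> y + inverse (2^n)" for n
  proof -
    have "real_of_int \<lceil>y * 2^n\<rceil> \<le> y * 2^n + 1" by linarith
    then have "real_of_int \<lceil>y * 2^n\<rceil> / 2^n \<le> (y * 2^n + 1) / 2^n" by (intro divide_right_mono) auto
    also have "\<dots> = y + inverse (2^n)" by (simp add: add_divide_distrib inverse_eq_divide)
    finally show ?thesis .
  qed
  have "(\<lambda>n. y + inverse ((2::real)^n)) \<longlonglongrightarrow> y + 0"
    by (intro tendsto_add tendsto_const LIMSEQ_inverse_realpow_zero) simp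
  then have up: "(\<lambda>n. y + inverse ((2::real)^n)) \<longlonglongrightarrow> y" by simp
  show "(\<lambda>n. real_of_int \<lceil>y * 2^n\<rceil> / 2^n) \<longlonglongrightarrow> y"
  proof (rule tendsto_sandwich[OF _ _ tendsto_const up])
    show "\<forall>\<^sub>F n in sequentially. y \<le> real_of_int \<lceil>y * 2^n\<rceil> / 2^n" using lo by simp
    show "\<forall>\<^sub>F n in sequentially. real_of_int \<lceil>y * 2^n\<rceil> / 2^n \<le> y + inverse (2^n)" using hi by simp
  qed
  show "0 < \<lceil>y * 2^n\<rceil>" for n using assms by (simp add: zero_less_mult_iff)
qed

lemma carath_meas:
  fixes \<Omega> :: "'a::euclidean_space set" and g :: "'a \<Rightarrow> real \<Rightarrow> real" and f :: "'a \<Rightarrow> real"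
  assumes "open \<Omega>" "caratheodory \<Omega> g" "f \<in> borel_measurable lebesgue"
    "AE x in lebesgue. x \<in> \<Omega> \<longrightarrow> f x > 0"
  shows "(\<lambda>x. indicator \<Omega> x * g x (f x)) \<in> borel_measurable lebesgue"
proof -
  have Om: "\<Omega> \<in> sets lebesgue" using assms(1) by (rule open_sets_lebesgue)
  have Gk: "(\<lambda>x. indicator \<Omega> x * g x y) \<in> borel_measurable lebesgue" if "y > 0" for y
  proof -
    have 1: "(\<lambda>x. g x y) \<in> borel_measurable (restrict_space lebesgue \<Omega>)"
      using assms(2) that unfolding caratheodory_def by auto
    have 2: "\<Omega> \<inter> space lebesgue \<in> sets lebesgue" using Om by simp
    have "(\<lambda>x. indicator \<Omega> x *\<^sub>R g x y) \<in> borel_measurable lebesgue"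
      by (rule iffD1[OF borel_measurable_restrict_space_iff[OF 2] 1])
    then show ?thesis by (simp only: real_scaleR_def)
  qed
  define G where "G n x = (if 0 < \<lceil>f x * 2^n\<rceil> then indicator \<Omega> x * g x (real_of_int \<lceil>f x * 2^n\<rceil> / 2^n) else 0)" for n x
  have Gm: "G n \<in> borel_measurable lebesgue" for n
  proof -
    have m1: "(\<lambda>x. f x * 2 ^ n) \<in> borel_measurable lebesgue"
      by (intro borel_measurable_times assms(3) borel_measurable_const)
    have Hc: "(\<lambda>x. \<lceil>f x * 2 ^ n\<rceil>) \<in> lebesgue \<rightarrow>\<^sub>M count_space UNIV"
      by (rule measurable_compose[OF m1 measurable_real_ceiling])
    have Hk: "(\<lambda>x. if 0 < k then indicator \<Omega> x * g x (real_of_int k / 2 ^ n) else 0) \<in> borel_measurable lebesgue"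
      for k :: int
    proof (cases "0 < k")
      case True
      then have "real_of_int k / 2 ^ n > 0" by simp
      from Gk[OF this] show ?thesis unfolding if_P[OF True] .
    next
      case False
      show ?thesis unfolding if_not_P[OF False] by (rule borel_measurable_const)
    qed
    have "(\<lambda>x. if 0 < \<lceil>f x * 2^n\<rceil> then indicator \<Omega> x * g x (real_of_int \<lceil>f x * 2^n\<rceil> / 2^n) else 0)
       \<in> borel_measurable lebesgue"
      by (rule measurable_compose_countable[OF Hk Hc])
    then show ?thesis unfolding G_def[abs_def] .
  qed
  have "(\<lambda>x. lim (\<lambda>n. G n x)) \<in> borel_measurable lebesgue"
    by (rule borel_measurable_lim_metric) (rule Gm)
  moreover have "AE x in lebesgue. lim (\<lambda>n. G n x) = indicator \<Omega> x * g x (f x)"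
    using assms(4) conjunct2[OF assms(2)[unfolded caratheodory_def]]
  proof eventually_elim
    case (elim x)
    show ?case
    proof (cases "x \<in> \<Omega>")
      case False
      then have "G n x = 0" for n unfolding G_def by simp
      then show ?thesis using False by simp
    next
      case True
      then have fx: "f x > 0" and c: "continuous_on {0<..} (g x)" using elim by auto
      note ca = ceil_approx[OF fx]
      have "G n x = g x (real_of_int \<lceil>f x * 2^n\<rceil> / 2^n)" for n
        unfolding G_def using ca(2)[of n] True by simp
      moreover have "(\<lambda>n. g x (real_of_int \<lceil>f x * 2^n\<rceil> / 2^n)) \<longlonglongrightarrow> g x (f x)"
      proof (rule continuous_on_tendsto_compose[OF c ca(1)])
        show "f x \<in> {0<..}" using fx by simp
        show "\<forall>\<^sub>F n in sequentially. real_of_int \<lceil>f x * 2^n\<rceil> / 2^n \<in> {0<..}"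
          using ca(2) by (intro always_eventually allI) simp
      qed
      ultimately have "(\<lambda>n. G n x) \<longlonglongrightarrow> g x (f x)" by simp
      then show ?thesis using True by (simp add: limI)
    qed
  qed
  ultimately show ?thesis by (rule borel_measurable_AE)
qed

lemma ext_integral_eq:
  fixes f :: "'b \<Rightarrow> real"
  assumes "integrable M f"
  shows "ext_integral M f = ereal (integral\<^sup>L M f)"
proof -
  have A: "(\<integral>\<^sup>+ x. ennreal (f x) \<partial>M) < top" "(\<integral>\<^sup>+ x. ennreal (- f x) \<partial>M) < top"
    using assms unfolding real_integrable_def by (auto simp: top.not_eq_extremum)
  have e1: "enn2ereal X = ereal (enn2real X)" if "X < top" for X
  proof -
    have "enn2ereal (ennreal (enn2real X)) = ereal (enn2real X)" by (intro enn2ereal_ennreal enn2real_nonneg)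
    then show ?thesis using that by simp
  qed
  have "enn2ereal (\<integral>\<^sup>+ x. ennreal (f x) \<partial>M) = ereal (enn2real (\<integral>\<^sup>+ x. ennreal (f x) \<partial>M))"
    using A(1) by (rule e1)
  moreover have "enn2ereal (\<integral>\<^sup>+ x. ennreal (- f x) \<partial>M) = ereal (enn2real (\<integral>\<^sup>+ x. ennreal (- f x) \<partial>M))"
    using A(2) by (rule e1)
  ultimately show ?thesis
    unfolding ext_integral_def real_lebesgue_integral_def[OF assms] by simp
qed

lemma gbound:
  fixes G :: "real \<Rightarrow> real"
  assumes "antimono_on {0<..} (\<lambda>y. G y / y)" "0 < a" "a \<le> y" "y \<le> b"
  shows "\<bar>G y\<bar> \<le> (b/a) * \<bar>G a\<bar> + \<bar>G b\<bar>"
proof -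
  have y0: "y > 0" "b > 0" using assms by auto
  have "G y / y \<le> G a / a" using monotone_onD[OF assms(1)] assms by auto
  then have "G y \<le> y * (G a / a)" using y0 by (simp add: field_simps)
  also have "\<dots> \<le> y * (\<bar>G a\<bar> / a)" using y0 assms(2) by (intro mult_left_mono divide_right_mono) auto
  also have "\<dots> \<le> b * (\<bar>G a\<bar> / a)" using assms by (intro mult_right_mono) auto
  finally have up: "G y \<le> (b/a) * \<bar>G a\<bar>" by simp
  have "G b / b \<le> G y / y" using monotone_onD[OF assms(1)] assms y0 by auto
  then have "y * (G b / b) \<le> G y" using y0 by (simp add: field_simps)
  moreover have "- \<bar>G b\<bar> \<le> y * (G b / b)"
  proof -
    have "y * (- \<bar>G b\<bar> / b) \<le> y * (G b / b)" using y0 by (intro mult_left_mono divide_right_mono) auto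
    moreover have "- \<bar>G b\<bar> \<le> y * (- \<bar>G b\<bar> / b)"
    proof -
      have "y / b \<le> 1" using y0 assms by simp
      then have "(y/b) * \<bar>G b\<bar> \<le> 1 * \<bar>G b\<bar>" by (rule mult_right_mono) simp
      then show ?thesis by simp
    qed
    ultimately show ?thesis by (rule order.trans[rotated])
  qed
  ultimately have lo: "- \<bar>G b\<bar> \<le> G y" by linarith
  have "(b/a) * \<bar>G a\<bar> \<ge> 0" using y0 assms by simp
  then show ?thesis using up lo by linarith
qed

lemma powr_strict:
  fixes u v q :: real
  assumes "0 < v" "v < u" "q > 0"
  shows "u powr (- q) / u < v powr (- q) / v"
proof -
  have "u powr (- q) \<le> v powr (- q)" using assms by (intro powr_mono2') auto
  moreover have "1/u < 1/v" using assms by (simp add: divide_strict_left_mono)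
  moreover have "u powr (-q) > 0" using assms by simp
  ultimately have h1: "u powr (-q) * (1/u) \<le> v powr (-q) * (1/u)"
    using assms by (intro mult_right_mono) auto
  have h2: "v powr (-q) * (1/u) < v powr (-q) * (1/v)"
    using assms \<open>1/u < 1/v\<close> by (intro mult_strict_left_mono) auto
  from h1 h2 have "u powr (-q) * (1/u) < v powr (-q) * (1/v)" by linarith
  then show ?thesis by simp
qed

lemma good_lemma:
  fixes c1 c2 W a b :: real
  assumes "0 < c1" "0 < c2" "0 < W" "c1*W \<le> a" "a \<le> c2*W" "c1*W \<le> b" "b \<le> c2*W"
  shows "good (max 1 (c2/c1)) a b"
proof -
  have a0: "a > 0" "b > 0" using assms by (smt (verit) mult_pos_pos)+
  have "c2*W = (c2/c1)*(c1*W)" using assms by simp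
  have ba: "b \<le> (c2/c1)*a"
  proof -
    have "b \<le> (c2/c1)*(c1*W)" using assms by simp
    also have "\<dots> \<le> (c2/c1)*a" using assms by (intro mult_left_mono) auto
    finally show ?thesis .
  qed
  have ab: "a \<le> (c2/c1)*b"
  proof -
    have "a \<le> (c2/c1)*(c1*W)" using assms by simp
    also have "\<dots> \<le> (c2/c1)*b" using assms by (intro mult_left_mono) auto
    finally show ?thesis .
  qed
  have "(c2/c1)*a \<le> max 1 (c2/c1) * a" "(c2/c1)*b \<le> max 1 (c2/c1) * b"
    using a0 by (intro mult_right_mono; simp)+
  then show ?thesis unfolding good_def using a0 ab ba by auto
qed

lemma sq_le_T:
  assumes "good R a b" "R \<ge> 1"
  shows "(phiT a b)\<^sup>2 \<le> LL R * (a\<^sup>2 + b\<^sup>2)" "(psiT a b)\<^sup>2 \<le> LL R * (a\<^sup>2 + b\<^sup>2)"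
proof -
  have L: "LL R \<ge> 1" "LL R \<ge> R\<^sup>2" using LL_ge[OF assms(2)] by auto
  have a0: "a \<ge> 0" "R \<ge> 0" using assms unfolding good_def by auto
  have "(phiT a b)\<^sup>2 \<le> a\<^sup>2" using phiT_le[OF a0(1)] phiT_nonneg by (intro power_mono) auto
  also have "\<dots> \<le> LL R * a\<^sup>2" using mult_right_mono[OF L(1), of "a\<^sup>2"] by simp
  also have "\<dots> \<le> LL R * (a\<^sup>2 + b\<^sup>2)" using L by (intro mult_left_mono) auto
  finally show "(phiT a b)\<^sup>2 \<le> LL R * (a\<^sup>2 + b\<^sup>2)" .
  have "(psiT a b)\<^sup>2 \<le> (R*a)\<^sup>2" using psiT_le[OF assms(1)] psiT_nonneg by (intro power_mono) auto
  also have "\<dots> = R\<^sup>2 * a\<^sup>2" by (simp add: power_mult_distrib)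
  also have "\<dots> \<le> LL R * a\<^sup>2" using L by (intro mult_right_mono) auto
  also have "\<dots> \<le> LL R * (a\<^sup>2 + b\<^sup>2)" using L by (intro mult_left_mono) auto
  finally show "(psiT a b)\<^sup>2 \<le> LL R * (a\<^sup>2 + b\<^sup>2)" .
qed

lemma psiT_le2:
  assumes "good R a b" "0 < a" "0 < b"
  shows "psiT a b \<le> R\<^sup>2 * b"
proof -
  have ab: "a \<le> R*b" using assms unfolding good_def by auto
  have "psiT a b = max 0 (a\<^sup>2 - b\<^sup>2)/b" using assms by (simp add: psiT_def psiF_def)
  also have "\<dots> \<le> a\<^sup>2/b" using assms by (intro divide_right_mono) auto
  also have "\<dots> \<le> (R*b)\<^sup>2/b" using assms ab by (intro divide_right_mono power_mono) auto
  also have "\<dots> = R\<^sup>2 * b" using assms by (simp add: power2_eq_square)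
  finally show ?thesis .
qed

lemma pt_bound:
  fixes b p K1 K2 c1 c2 W Gb G1 G2 q :: real
  assumes "b > 0" "0 \<le> p" "p \<le> K1*b" "p \<le> K2*(c2*W)" "K1 \<ge> 0" "K2 \<ge> 0" "W > 0" "c1 > 0" "c2 > 0"
    "\<bar>Gb\<bar> \<le> (c2/c1)*\<bar>G1\<bar> + \<bar>G2\<bar>"
  shows "\<bar>(b powr (-q) + Gb) * p\<bar> \<le> K1 * b powr (1-q) + K2*c2*((c2/c1)*(\<bar>G1\<bar>*W) + \<bar>G2\<bar>*W)"
proof -
  have "\<bar>(b powr (-q) + Gb) * p\<bar> \<le> b powr (-q) * p + \<bar>Gb\<bar> * p"
    using assms(2) by (simp add: abs_mult) (smt (verit) abs_triangle_ineq distrib_right mult_right_mono abs_ge_zero powr_ge_zero abs_of_nonneg)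
  moreover have "b powr (-q) * p \<le> b powr (-q) * (K1*b)" using assms by (intro mult_left_mono) auto
  moreover have "b powr (-q) * (K1*b) = K1 * b powr (1-q)"
    using assms(1) by (simp add: powr_add[symmetric] powr_diff field_simps)
  moreover have "\<bar>Gb\<bar> * p \<le> ((c2/c1)*\<bar>G1\<bar> + \<bar>G2\<bar>) * (K2*(c2*W))"
    using assms by (intro mult_mono) auto
  moreover have "((c2/c1)*\<bar>G1\<bar> + \<bar>G2\<bar>) * (K2*(c2*W)) = K2*c2*((c2/c1)*(\<bar>G1\<bar>*W) + \<bar>G2\<bar>*W)"
    by (simp add: algebra_simps)
  ultimately show ?thesis by linarith
qed

lemma pt_diff:
  fixes a b q Ga Gb :: real
  assumes "0 < a" "0 < b" "q > 0" "b < a \<Longrightarrow> Ga/a \<le> Gb/b"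
  shows "0 \<le> (b powr (-q) + Gb) * psiT a b - (a powr (-q) + Ga) * phiT a b"
    and "b < a \<Longrightarrow> 0 < (b powr (-q) + Gb) * psiT a b - (a powr (-q) + Ga) * phiT a b"
proof -
  have main: "0 < (b powr (-q) + Gb) * psiT a b - (a powr (-q) + Ga) * phiT a b" if ba: "b < a"
  proof -
    define P where "P = a\<^sup>2 - b\<^sup>2"
    have P: "P > 0" unfolding P_def using ba assms by (simp add: power_strict_mono)
    have e: "psiT a b = P/b" "phiT a b = P/a"
      using assms P unfolding psiT_def phiT_def psiF_def phiF_def P_def by auto
    have "(b powr (-q) + Gb) * (P/b) - (a powr (-q) + Ga) * (P/a)
        = P * ((b powr (-q)/b - a powr (-q)/a) + (Gb/b - Ga/a))"
      using assms(1,2) by (simp add: field_simps)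
    moreover have "b powr (-q)/b - a powr (-q)/a > 0" using powr_strict[OF assms(2) ba assms(3)] by simp
    moreover have "Gb/b - Ga/a \<ge> 0" using assms(4)[OF ba] by simp
    ultimately show ?thesis unfolding e using P by simp
  qed
  show "b < a \<Longrightarrow> 0 < (b powr (-q) + Gb) * psiT a b - (a powr (-q) + Ga) * phiT a b" by (rule main)
  show "0 \<le> (b powr (-q) + Gb) * psiT a b - (a powr (-q) + Ga) * phiT a b"
  proof (cases "b < a")
    case True then show ?thesis using main by (simp add: less_imp_le)
  next
    case False
    then have "a\<^sup>2 \<le> b\<^sup>2" using assms by (intro power_mono) auto
    then have "psiT a b = 0" "phiT a b = 0" unfolding psiT_def phiT_def psiF_def phiF_def by auto
    then show ?thesis by simp
  qed
qed

theorem theorem5p2: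
  fixes \<Omega> :: "'a::euclidean_space set" and s q c1 c2 :: real
    and g :: "'a \<Rightarrow> real \<Rightarrow> real" and u v w :: "'a \<Rightarrow> real"
  assumes "0 < s" and "s < 1" and "real DIM('a) > 2 * s"
    and "open \<Omega>" and "connected \<Omega>" and "bounded \<Omega>" and "C2_boundary \<Omega>"
    and "q > 0"
    and "caratheodory \<Omega> g"
    and "\<exists>M. AE x in lebesgue. x \<in> \<Omega> \<longrightarrow> (\<forall>y>0. M \<le> g x y)"
    and "AE x in lebesgue. x \<in> \<Omega> \<longrightarrow> antimono_on {0<..} (\<lambda>y. g x y / y)"
    and "u \<in> Linf \<Omega>" and "u \<in> X0 s \<Omega>" and "v \<in> Linf \<Omega>" and "v \<in> X0 s \<Omega>"
    and "AE x in lebesgue. x \<in> \<Omega> \<longrightarrow> u x > 0"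
    and "AE x in lebesgue. x \<in> \<Omega> \<longrightarrow> v x > 0"
    and "(\<integral>\<^sup>+ x. indicator \<Omega> x * ennreal (u x powr (1 - q)) \<partial>lebesgue) < \<infinity>"
    and "(\<integral>\<^sup>+ x. indicator \<Omega> x * ennreal (v x powr (1 - q)) \<partial>lebesgue) < \<infinity>"
    and "frac_sub s \<Omega> u (\<lambda>x. u x powr (- q) + g x (u x))"
    and "frac_super s \<Omega> v (\<lambda>x. v x powr (- q) + g x (v x))"
    and "w \<in> Linf \<Omega>" and "AE x in lebesgue. x \<in> \<Omega> \<longrightarrow> w x > 0"
    and "c1 > 0" and "c2 > 0"
    and "AE x in lebesgue. x \<in> \<Omega> \<longrightarrow>
           c1 * w x \<le> u x \<and> u x \<le> c2 * w x \<and> c1 * w x \<le> v x \<and> v x \<le> c2 * w x"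
    and "(\<integral>\<^sup>+ x. indicator \<Omega> x * ennreal (\<bar>g x (c1 * w x)\<bar> * w x) \<partial>lebesgue) < \<infinity>"
    and "(\<integral>\<^sup>+ x. indicator \<Omega> x * ennreal (\<bar>g x (c2 * w x)\<bar> * w x) \<partial>lebesgue) < \<infinity>"
  shows "AE x in lebesgue. x \<in> \<Omega> \<longrightarrow> u x \<le> v x"
proof -
  define R where "R = max 1 (c2/c1)"
  define L where "L = LL R"
  define \<phi> where "\<phi> = (\<lambda>x. phiT (u x) (v x))"
  define \<psi> where "\<psi> = (\<lambda>x. psiT (u x) (v x))"
  define wI where "wI = (\<lambda>x. indicator \<Omega> x * w x)"
  have R1: "R \<ge> 1" unfolding R_def by simp
  have L0: "L \<ge> 0" using LL_ge[OF R1] unfolding L_def by auto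
  have Om[measurable]: "\<Omega> \<in> sets lebesgue" using assms(4) by (rule open_sets_lebesgue)
  note uX = X0_parts[OF assms(13)] and vX = X0_parts[OF assms(15)]
  have um[measurable]: "u \<in> borel_measurable lebesgue" and vm[measurable]: "v \<in> borel_measurable lebesgue"
    using uX vX by auto
  have wIm[measurable]: "wI \<in> borel_measurable lebesgue"
  proof -
    have 1: "w \<in> borel_measurable (restrict_space lebesgue \<Omega>)" using assms(22) unfolding Linf_def by auto
    have 2: "\<Omega> \<inter> space lebesgue \<in> sets lebesgue" using Om by simp
    have "(\<lambda>x. indicator \<Omega> x *\<^sub>R w x) \<in> borel_measurable lebesgue"
      by (rule iffD1[OF borel_measurable_restrict_space_iff[OF 2] 1])
    then show ?thesis unfolding wI_def by (simp only: real_scaleR_def)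
  qed
  have AEg: "AE x in lebesgue. good R (u x) (v x) \<and>
      (x \<in> \<Omega> \<longrightarrow> 0 < u x \<and> 0 < v x \<and> 0 < w x \<and> c1 * w x \<le> u x \<and> u x \<le> c2 * w x
         \<and> c1 * w x \<le> v x \<and> v x \<le> c2 * w x \<and> antimono_on {0<..} (\<lambda>y. g x y / y)) \<and>
      (x \<notin> \<Omega> \<longrightarrow> u x = 0 \<and> v x = 0)"
    using assms(16,17,23,26,11) uX(2) vX(2)
  proof eventually_elim
    case (elim x)
    show ?case
    proof (cases "x \<in> \<Omega>")
      case True
      with elim have h: "0 < w x" "c1 * w x \<le> u x" "u x \<le> c2 * w x" "c1 * w x \<le> v x" "v x \<le> c2 * w x" by auto
      have "good R (u x) (v x)" unfolding R_def by (rule good_lemma[OF assms(24,25) h])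
      then show ?thesis using elim True by auto
    next
      case False
      then show ?thesis using elim by (auto simp: good_def)
    qed
  qed
  have \<phi>m[measurable]: "\<phi> \<in> borel_measurable lebesgue"
    unfolding \<phi>_def phiT_def phiF_def by measurable
  have \<psi>m[measurable]: "\<psi> \<in> borel_measurable lebesgue"
    unfolding \<psi>_def psiT_def psiF_def by measurable
  have AEpair: "AE z in lebesgue \<Otimes>\<^sub>M lebesgue. good R (u (fst z)) (v (fst z)) \<and> good R (u (snd z)) (v (snd z))"
  proof -
    have "AE x in lebesgue. good R (u x) (v x)" using AEg by eventually_elim simp
    from AE_pair_both[OF this] show ?thesis .
  qed
  have \<phi>X: "\<phi> \<in> X0 s \<Omega>"
  proof (rule X0_intro[OF assms(4,1,2,13,15) \<phi>m _ L0])
    show "AE x in lebesgue. x \<notin> \<Omega> \<longrightarrow> \<phi> x = 0"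
      using AEg by eventually_elim (auto simp: \<phi>_def phiT_def)
    show "AE x in lebesgue. (\<phi> x)\<^sup>2 \<le> L * ((u x)\<^sup>2 + (v x)\<^sup>2)"
      using AEg by eventually_elim (use sq_le_T R1 in \<open>auto simp: \<phi>_def L_def\<close>)
    show "AE z in lebesgue \<Otimes>\<^sub>M lebesgue. (\<phi> (fst z) - \<phi> (snd z))\<^sup>2 \<le> L * ((u (fst z) - u (snd z))\<^sup>2 + (v (fst z) - v (snd z))\<^sup>2)"
      using AEpair by eventually_elim (use lip_T R1 in \<open>auto simp: \<phi>_def L_def\<close>)
  qed
  have \<psi>X: "\<psi> \<in> X0 s \<Omega>"
  proof (rule X0_intro[OF assms(4,1,2,13,15) \<psi>m _ L0])
    show "AE x in lebesgue. x \<notin> \<Omega> \<longrightarrow> \<psi> x = 0"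
      using AEg by eventually_elim (auto simp: \<psi>_def psiT_def)
    show "AE x in lebesgue. (\<psi> x)\<^sup>2 \<le> L * ((u x)\<^sup>2 + (v x)\<^sup>2)"
      using AEg by eventually_elim (use sq_le_T R1 in \<open>auto simp: \<psi>_def L_def\<close>)
    show "AE z in lebesgue \<Otimes>\<^sub>M lebesgue. (\<psi> (fst z) - \<psi> (snd z))\<^sup>2 \<le> L * ((u (fst z) - u (snd z))\<^sup>2 + (v (fst z) - v (snd z))\<^sup>2)"
      using AEpair by eventually_elim (use lip_T R1 in \<open>auto simp: \<psi>_def L_def\<close>)
  qed
  have \<phi>nn: "AE x in lebesgue. 0 \<le> \<phi> x" by (rule AE_I2) (simp add: \<phi>_def phiT_nonneg)
  have \<psi>nn: "AE x in lebesgue. 0 \<le> \<psi> x" by (rule AE_I2) (simp add: \<psi>_def psiT_nonneg)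
  define Hu where "Hu = (\<lambda>x. indicator \<Omega> x * (u x powr - q + g x (u x)) * \<phi> x)"
  define Hv where "Hv = (\<lambda>x. indicator \<Omega> x * (v x powr - q + g x (v x)) * \<psi> x)"
  have sub: "ereal (frac_form s \<Omega> u \<phi>) \<le> ext_integral lebesgue Hu"
    using assms(20) \<phi>X \<phi>nn unfolding frac_sub_def Hu_def by blast
  have super: "ereal (frac_form s \<Omega> v \<psi>) \<ge> ext_integral lebesgue Hv"
    using assms(21) \<psi>X \<psi>nn unfolding frac_super_def Hv_def by blast
  have Tint: "integrable lebesgue (\<lambda>x. \<bar>indicator \<Omega> x * g x (c * wI x)\<bar> * wI x)"
    if c0: "c > 0" and fin: "(\<integral>\<^sup>+ x. indicator \<Omega> x * ennreal (\<bar>g x (c * w x)\<bar> * w x) \<partial>lebesgue) < \<infinity>" for c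
  proof (rule integrableI_nonneg)
    have "AE x in lebesgue. x \<in> \<Omega> \<longrightarrow> c * wI x > 0"
      using assms(23) by eventually_elim (use c0 in \<open>auto simp: wI_def\<close>)
    then have [measurable]: "(\<lambda>x. indicator \<Omega> x * g x (c * wI x)) \<in> borel_measurable lebesgue"
      by (intro carath_meas[OF assms(4,9)]) auto
    show "(\<lambda>x. \<bar>indicator \<Omega> x * g x (c * wI x)\<bar> * wI x) \<in> borel_measurable lebesgue" by measurable
    show "AE x in lebesgue. 0 \<le> \<bar>indicator \<Omega> x * g x (c * wI x)\<bar> * wI x"
      using assms(23) by eventually_elim (auto simp: wI_def indicator_def)
    have "(\<integral>\<^sup>+ x. ennreal (\<bar>indicator \<Omega> x * g x (c * wI x)\<bar> * wI x) \<partial>lebesgue)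
        = (\<integral>\<^sup>+ x. indicator \<Omega> x * ennreal (\<bar>g x (c * w x)\<bar> * w x) \<partial>lebesgue)"
      by (intro nn_integral_cong) (simp add: wI_def indicator_def)
    with fin show "(\<integral>\<^sup>+ x. ennreal (\<bar>indicator \<Omega> x * g x (c * wI x)\<bar> * wI x) \<partial>lebesgue) < \<infinity>" by simp
  qed
  have T1: "integrable lebesgue (\<lambda>x. \<bar>indicator \<Omega> x * g x (c1 * wI x)\<bar> * wI x)" by (rule Tint[OF assms(24,27)])
  have T2: "integrable lebesgue (\<lambda>x. \<bar>indicator \<Omega> x * g x (c2 * wI x)\<bar> * wI x)" by (rule Tint[OF assms(25,28)])
  have Pint: "integrable lebesgue (\<lambda>x. indicator \<Omega> x * f x powr (1 - q))"
    if fm: "f \<in> borel_measurable lebesgue" and fin: "(\<integral>\<^sup>+ x. indicator \<Omega> x * ennreal (f x powr (1 - q)) \<partial>lebesgue) < \<infinity>" for f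
  proof (rule integrableI_nonneg)
    show "(\<lambda>x. indicator \<Omega> x * f x powr (1 - q)) \<in> borel_measurable lebesgue" using fm by measurable
    show "AE x in lebesgue. 0 \<le> indicator \<Omega> x * f x powr (1 - q)" by (rule AE_I2) simp
    show "(\<integral>\<^sup>+ x. ennreal (indicator \<Omega> x * f x powr (1 - q)) \<partial>lebesgue) < \<infinity>"
      using fin by (simp add: ind_ennreal)
  qed
  have P1: "integrable lebesgue (\<lambda>x. indicator \<Omega> x * u x powr (1 - q))" by (rule Pint[OF um assms(18)])
  have P2: "integrable lebesgue (\<lambda>x. indicator \<Omega> x * v x powr (1 - q))" by (rule Pint[OF vm assms(19)])
  define Bg where "Bg = (\<lambda>x. (c2/c1) * (\<bar>indicator \<Omega> x * g x (c1 * wI x)\<bar> * wI x) + \<bar>indicator \<Omega> x * g x (c2 * wI x)\<bar> * wI x)"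
  have Bg_int: "integrable lebesgue Bg" unfolding Bg_def using T1 T2 by auto
  have gb: "\<bar>g x y\<bar> \<le> (c2/c1) * \<bar>g x (c1 * w x)\<bar> + \<bar>g x (c2 * w x)\<bar>"
    if "antimono_on {0<..} (\<lambda>y. g x y / y)" "0 < w x" "c1 * w x \<le> y" "y \<le> c2 * w x" for x y
  proof -
    have "\<bar>g x y\<bar> \<le> ((c2 * w x)/(c1 * w x)) * \<bar>g x (c1 * w x)\<bar> + \<bar>g x (c2 * w x)\<bar>"
      by (rule gbound[OF that(1) _ that(3,4)]) (use that(2) assms(24) in simp)
    also have "(c2 * w x)/(c1 * w x) = c2/c1" using that(2) by simp
    finally show ?thesis .
  qed
  have Hu_int: "integrable lebesgue Hu"
  proof (rule Bochner_Integration.integrable_bound)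
    show "integrable lebesgue (\<lambda>x. 1 * (indicator \<Omega> x * u x powr (1 - q)) + 1 * c2 * Bg x)"
      using P1 Bg_int by auto
    have [measurable]: "(\<lambda>x. indicator \<Omega> x * g x (u x)) \<in> borel_measurable lebesgue"
      by (rule carath_meas[OF assms(4,9) um assms(16)])
    have "Hu = (\<lambda>x. (indicator \<Omega> x * u x powr - q + indicator \<Omega> x * g x (u x)) * \<phi> x)"
      unfolding Hu_def by (simp add: algebra_simps)
    also have "\<dots> \<in> borel_measurable lebesgue" by measurable
    finally show "Hu \<in> borel_measurable lebesgue" .
    show "AE x in lebesgue. norm (Hu x) \<le> norm (1 * (indicator \<Omega> x * u x powr (1 - q)) + 1 * c2 * Bg x)"
      using AEg
    proof eventually_elim
      case (elim x)
      show ?case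
      proof (cases "x \<in> \<Omega>")
        case True
        with elim have h: "0 < u x" "0 < v x" "0 < w x" "c1 * w x \<le> u x" "u x \<le> c2 * w x"
          "antimono_on {0<..} (\<lambda>y. g x y / y)" and gd: "good R (u x) (v x)" by auto
        have p: "0 \<le> phiT (u x) (v x)" "phiT (u x) (v x) \<le> 1 * u x" "phiT (u x) (v x) \<le> 1 * (c2 * w x)"
          using phiT_nonneg phiT_le[of "u x" "v x"] h by auto
        have "\<bar>(u x powr (-q) + g x (u x)) * phiT (u x) (v x)\<bar> \<le> 1 * u x powr (1-q) + 1*c2*((c2/c1)*(\<bar>g x (c1 * w x)\<bar>*w x) + \<bar>g x (c2 * w x)\<bar>*w x)"
          by (rule pt_bound[OF h(1) p _ _ h(3) assms(24,25) gb[OF h(6,3,4,5)]]) auto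
        moreover have "0 \<le> 1 * u x powr (1-q) + 1*c2*((c2/c1)*(\<bar>g x (c1 * w x)\<bar>*w x) + \<bar>g x (c2 * w x)\<bar>*w x)"
          using h assms(24,25) by (intro add_nonneg_nonneg mult_nonneg_nonneg) auto
        ultimately show ?thesis using True unfolding Hu_def Bg_def wI_def \<phi>_def by simp
      next
        case False
        then show ?thesis unfolding Hu_def by simp
      qed
    qed
  qed
  have Hv_int: "integrable lebesgue Hv"
  proof (rule Bochner_Integration.integrable_bound)
    show "integrable lebesgue (\<lambda>x. R\<^sup>2 * (indicator \<Omega> x * v x powr (1 - q)) + R * c2 * Bg x)"
      using P2 Bg_int by auto
    have [measurable]: "(\<lambda>x. indicator \<Omega> x * g x (v x)) \<in> borel_measurable lebesgue"
      by (rule carath_meas[OF assms(4,9) vm assms(17)])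
    have "Hv = (\<lambda>x. (indicator \<Omega> x * v x powr - q + indicator \<Omega> x * g x (v x)) * \<psi> x)"
      unfolding Hv_def by (simp add: algebra_simps)
    also have "\<dots> \<in> borel_measurable lebesgue" by measurable
    finally show "Hv \<in> borel_measurable lebesgue" .
    show "AE x in lebesgue. norm (Hv x) \<le> norm (R\<^sup>2 * (indicator \<Omega> x * v x powr (1 - q)) + R * c2 * Bg x)"
      using AEg
    proof eventually_elim
      case (elim x)
      show ?case
      proof (cases "x \<in> \<Omega>")
        case True
        with elim have h: "0 < u x" "0 < v x" "0 < w x" "c1 * w x \<le> v x" "v x \<le> c2 * w x" "u x \<le> c2 * w x"
          "antimono_on {0<..} (\<lambda>y. g x y / y)" and gd: "good R (u x) (v x)" by auto
        have "psiT (u x) (v x) \<le> R * u x" by (rule psiT_le[OF gd])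
        also have "\<dots> \<le> R * (c2 * w x)" using h R1 by (intro mult_left_mono) auto
        finally have p3: "psiT (u x) (v x) \<le> R * (c2 * w x)" .
        have p: "0 \<le> psiT (u x) (v x)" "psiT (u x) (v x) \<le> R\<^sup>2 * v x"
          using psiT_nonneg psiT_le2[OF gd h(1,2)] by auto
        have "\<bar>(v x powr (-q) + g x (v x)) * psiT (u x) (v x)\<bar> \<le> R\<^sup>2 * v x powr (1-q) + R*c2*((c2/c1)*(\<bar>g x (c1 * w x)\<bar>*w x) + \<bar>g x (c2 * w x)\<bar>*w x)"
          by (rule pt_bound[OF h(2) p p3 _ _ h(3) assms(24,25) gb[OF h(7,3,4,5)]]) (use R1 in auto)
        moreover have "0 \<le> R\<^sup>2 * v x powr (1-q) + R*c2*((c2/c1)*(\<bar>g x (c1 * w x)\<bar>*w x) + \<bar>g x (c2 * w x)\<bar>*w x)"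
          using h assms(24,25) R1 by (intro add_nonneg_nonneg mult_nonneg_nonneg) auto
        ultimately show ?thesis using True unfolding Hv_def Bg_def wI_def \<psi>_def by simp
      next
        case False
        then show ?thesis unfolding Hv_def by simp
      qed
    qed
  qed
  have ineq1: "frac_form s \<Omega> u \<phi> \<le> integral\<^sup>L lebesgue Hu"
    using sub unfolding ext_integral_eq[OF Hu_int] by simp
  have ineq2: "integral\<^sup>L lebesgue Hv \<le> frac_form s \<Omega> v \<psi>"
    using super unfolding ext_integral_eq[OF Hv_int] by simp
  have pic: "frac_form s \<Omega> v \<psi> \<le> frac_form s \<Omega> u \<phi>"
  proof -
    have "frac_form s \<Omega> u \<phi> - frac_form s \<Omega> v \<psi> = (\<integral> z. Bf s \<Omega> u \<phi> z - Bf s \<Omega> v \<psi> z \<partial>(lebesgue \<Otimes>\<^sub>M lebesgue))"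
      unfolding frac_form_Bf
      by (rule Bochner_Integration.integral_diff[symmetric, OF Bf_int[OF assms(4,1,2,13) \<phi>X] Bf_int[OF assms(4,1,2,15) \<psi>X]])
    also have "\<dots> \<ge> 0"
    proof (rule integral_nonneg_AE)
      show "AE z in lebesgue \<Otimes>\<^sub>M lebesgue. 0 \<le> Bf s \<Omega> u \<phi> z - Bf s \<Omega> v \<psi> z"
        using AEpair
      proof eventually_elim
        case (elim z)
        define E where "E = (u (fst z) - u (snd z)) * (\<phi> (fst z) - \<phi> (snd z)) - (v (fst z) - v (snd z)) * (\<psi> (fst z) - \<psi> (snd z))"
        have E: "E \<ge> 0" unfolding E_def \<phi>_def \<psi>_def using picone_T elim by blast
        have C: "frac_const DIM('a) s > 0" using frac_const_pos assms(1,2) by auto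
        have "Bf s \<Omega> u \<phi> z - Bf s \<Omega> v \<psi> z = frac_const DIM('a) s * (indicator (QQ \<Omega>) z * (E / Kd s z))"
          unfolding Bf_def E_def by (simp add: diff_divide_distrib right_diff_distrib)
        also have "\<dots> \<ge> 0" using C E Kd_nonneg[of s z]
          by (intro mult_nonneg_nonneg divide_nonneg_nonneg) auto
        finally show ?case .
      qed
    qed
    finally show ?thesis by simp
  qed
  have Dint: "integrable lebesgue (\<lambda>x. Hv x - Hu x)" using Hu_int Hv_int by auto
  have Dle: "integral\<^sup>L lebesgue (\<lambda>x. Hv x - Hu x) \<le> 0"
    using ineq1 ineq2 pic Hu_int Hv_int by simp
  have AEdiff: "AE x in lebesgue. 0 \<le> Hv x - Hu x \<and> (x \<in> \<Omega> \<and> v x < u x \<longrightarrow> 0 < Hv x - Hu x)"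
    using AEg
  proof eventually_elim
    case (elim x)
    show ?case
    proof (cases "x \<in> \<Omega>")
      case True
      with elim have h: "0 < u x" "0 < v x" "antimono_on {0<..} (\<lambda>y. g x y / y)" by auto
      have mono: "g x (u x) / u x \<le> g x (v x) / v x" if "v x < u x"
        using monotone_onD[OF h(3)] h that by auto
      have e: "Hv x - Hu x = (v x powr (-q) + g x (v x)) * psiT (u x) (v x) - (u x powr (-q) + g x (u x)) * phiT (u x) (v x)"
        unfolding Hu_def Hv_def \<phi>_def \<psi>_def using True by simp
      show ?thesis unfolding e using pt_diff[OF h(1,2) assms(8) mono] True by auto
    next
      case False
      then show ?thesis unfolding Hu_def Hv_def by simp
    qed
  qed
  have "integral\<^sup>L lebesgue (\<lambda>x. Hv x - Hu x) \<ge> 0"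
    using AEdiff by (intro integral_nonneg_AE) (auto elim: eventually_mono)
  with Dle have "integral\<^sup>L lebesgue (\<lambda>x. Hv x - Hu x) = 0" by simp
  then have "AE x in lebesgue. Hv x - Hu x = 0"
    using integral_nonneg_eq_0_iff_AE[OF Dint] AEdiff by (auto elim: eventually_mono)
  then show ?thesis using AEdiff by eventually_elim (auto simp: not_less[symmetric])
qed

end
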